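(* Let $v,k$ be positive integers with $k\mid v$ and $v\mid k^2$, and let $\lambda=k^2/v$. Let $X=(x_t)_{t=0}^{v-1}$ be the binary sequence with $x_t=1$ for $0\le t\le k-1$ and $x_t=0$ for $k\le t\le v-1$. Let $Y=(y_t)_{t=0}^{v-1}$ be any binary sequence such that $y_{t+k}=y_t$ for all $t$ (indices modulo $v$) and $y_0y_1\dots y_{k-1}$ has weight $\lambda$. Then the subsets $A_X=\{t: x_t=1\}$ and $A_Y=\{t:y_t=1\}$ of $\mathbb{Z}_v$ form a $(v,2,k,\lambda)$-PSEDF in $\mathbb{Z}_v$ and a non-disjoint $(v,2,k,\lambda)$-SEDF in $\mathbb{Z}_v$.
   Context: A binary sequence $(x_t)_{t=0}^{v-1}$ corresponds to the subset $\{t\in\mathbb{Z}_v: x_t=1\}$ of $\mathbb{Z}_v$; its weight is the number of ones. For subsets $A,B$ of a group $G$, $\Delta(A,B)$ is the multiset $\{a-b:a\in A,b\in B\}$ and $\lambda G$ is the multiset with each element of $G$ exactly $\lambda$ times. For $G$ of order $v$ and $m>1$, a family of $k$-subsets $\{A_1,\dots,A_m\}$ of $G$ is a $(v,m,k,\lambda)$-PSEDF if $\Delta(A_i,A_j)=\lambda G$ for every $i\neq j$; it is a non-disjoint $(v,m,k,\lambda)$-SEDF if for each $i$ the multiset union $\bigcup_{j\neq i}\Delta(A_i,A_j)$ equals $\lambda G$. The sets need not be disjoint. *)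

theory Defs
  imports Main "HOL-Library.Multiset"
begin

text \<open>Elements of Z_v are represented by the naturals 0..v-1; subtraction is mod v.\<close>

definition zdiff :: "nat \<Rightarrow> nat set \<Rightarrow> nat set \<Rightarrow> nat multiset" where
  "zdiff v A B = image_mset (\<lambda>(a, b). (a + v - b) mod v) (mset_set (A \<times> B))"

definition lamG :: "nat \<Rightarrow> nat \<Rightarrow> nat multiset" where
  "lamG v lam = repeat_mset lam (mset_set {..<v})"

definition ksubset_family :: "nat \<Rightarrow> nat \<Rightarrow> nat \<Rightarrow> (nat \<Rightarrow> nat set) \<Rightarrow> bool" where
  "ksubset_family v m k A = (1 < m \<and> (\<forall>i<m. A i \<subseteq> {..<v} \<and> card (A i) = k))"

definition is_PSEDF :: "nat \<Rightarrow> nat \<Rightarrow> nat \<Rightarrow> nat \<Rightarrow> (nat \<Rightarrow> nat set) \<Rightarrow> bool" where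
  "is_PSEDF v m k lam A = (ksubset_family v m k A \<and>
     (\<forall>i<m. \<forall>j<m. i \<noteq> j \<longrightarrow> zdiff v (A i) (A j) = lamG v lam))"

definition is_SEDF :: "nat \<Rightarrow> nat \<Rightarrow> nat \<Rightarrow> nat \<Rightarrow> (nat \<Rightarrow> nat set) \<Rightarrow> bool" where
  "is_SEDF v m k lam A = (ksubset_family v m k A \<and>
     (\<forall>i<m. (\<Sum>j\<in>{..<m} - {i}. zdiff v (A i) (A j)) = lamG v lam))"

end

theory Submission imports Defs "HOL-Library.FuncSet" begin

lemma count_img_mset_set:
  assumes "finite S"
  shows "count (image_mset f (mset_set S)) g = card {p\<in>S. f p = g}"
proof -
  have "count (image_mset f (mset_set S)) g = (\<Sum>x | x \<in># mset_set S \<and> g = f x. count (mset_set S) x)"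
    by (rule count_image_mset')
  also have "\<dots> = (\<Sum>x\<in>{p\<in>S. f p = g}. 1)"
    using assms by (intro sum.cong) auto
  finally show ?thesis by simp
qed

lemma key1:
  assumes "(a::nat) < v" "b < v" "g < v"
  shows "((a + v - b) mod v = g) = (b = (a + v - g) mod v)"
proof -
  have e1: "(a + v - b) mod v = (if b \<le> a then a - b else a + v - b)"
  proof (cases "b \<le> a")
    case True
    then have eq: "a + v - b = (a - b) + v" by simp
    have "(a - b + v) mod v = (a - b) mod v" by (rule mod_add_self2)
    also have "\<dots> = a - b" using assms by (intro mod_less) linarith
    finally show ?thesis using True by (simp only: eq if_True)
  next
    case False
    then show ?thesis using assms by simp
  qed
  have e2: "(a + v - g) mod v = (if g \<le> a then a - g else a + v - g)"
  proof (cases "g \<le> a")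
    case True
    then have eq: "a + v - g = (a - g) + v" by simp
    have "(a - g + v) mod v = (a - g) mod v" by (rule mod_add_self2)
    also have "\<dots> = a - g" using assms by (intro mod_less) linarith
    finally show ?thesis using True by (simp only: eq if_True)
  next
    case False
    then show ?thesis using assms by simp
  qed
  show ?thesis unfolding e1 e2 using assms by auto
qed

lemma key2:
  assumes "(a::nat) < v" "b < v" "g < v"
  shows "((a + v - b) mod v = g) = (a = (b + g) mod v)"
proof -
  have e1: "(a + v - b) mod v = (if b \<le> a then a - b else a + v - b)"
  proof (cases "b \<le> a")
    case True
    then have eq: "a + v - b = (a - b) + v" by simp
    have "(a - b + v) mod v = (a - b) mod v" by (rule mod_add_self2)
    also have "\<dots> = a - b" using assms by (intro mod_less) linarith
    finally show ?thesis using True by (simp only: eq if_True)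
  next
    case False
    then show ?thesis using assms by simp
  qed
  have e2: "(b + g) mod v = (if b + g < v then b + g else b + g - v)"
    using assms by (simp add: mod_if)
  show ?thesis unfolding e1 e2 using assms by auto
qed

lemma zdiff_count_fst:
  assumes "A \<subseteq> {..<v}" "B \<subseteq> {..<v}" "g < v"
  shows "count (zdiff v A B) g = card {a\<in>A. (a + v - g) mod v \<in> B}"
proof -
  have fin: "finite (A \<times> B)" using assms by (meson finite_SigmaI finite_lessThan finite_subset)
  have "count (zdiff v A B) g = card {p\<in>A\<times>B. (\<lambda>(a, b). (a + v - b) mod v) p = g}"
    unfolding zdiff_def by (rule count_img_mset_set[OF fin])
  also have "{p\<in>A\<times>B. (\<lambda>(a, b). (a + v - b) mod v) p = g} = (\<lambda>a. (a, (a + v - g) mod v)) ` {a\<in>A. (a + v - g) mod v \<in> B}"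
  proof (intro equalityI subsetI)
    fix p assume p: "p \<in> {p\<in>A\<times>B. (\<lambda>(a, b). (a + v - b) mod v) p = g}"
    obtain a b where ab: "p = (a, b)" "a \<in> A" "b \<in> B" "(a + v - b) mod v = g" using p by auto
    have "b = (a + v - g) mod v" using key1[of a v b g] ab assms by auto
    then show "p \<in> (\<lambda>a. (a, (a + v - g) mod v)) ` {a\<in>A. (a + v - g) mod v \<in> B}" using ab by auto
  next
    fix p assume "p \<in> (\<lambda>a. (a, (a + v - g) mod v)) ` {a\<in>A. (a + v - g) mod v \<in> B}"
    then obtain a where a: "p = (a, (a + v - g) mod v)" "a \<in> A" "(a + v - g) mod v \<in> B" by auto
    have "(a + v - (a + v - g) mod v) mod v = g" using key1[of a v "(a + v - g) mod v" g] a assms by auto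
    then show "p \<in> {p\<in>A\<times>B. (\<lambda>(a, b). (a + v - b) mod v) p = g}" using a by auto
  qed
  also have "card \<dots> = card {a\<in>A. (a + v - g) mod v \<in> B}"
    by (rule card_image) (auto simp: inj_on_def)
  finally show ?thesis .
qed

lemma zdiff_count_snd:
  assumes "A \<subseteq> {..<v}" "B \<subseteq> {..<v}" "g < v"
  shows "count (zdiff v A B) g = card {b\<in>B. (b + g) mod v \<in> A}"
proof -
  have fin: "finite (A \<times> B)" using assms by (meson finite_SigmaI finite_lessThan finite_subset)
  have "count (zdiff v A B) g = card {p\<in>A\<times>B. (\<lambda>(a, b). (a + v - b) mod v) p = g}"
    unfolding zdiff_def by (rule count_img_mset_set[OF fin])
  also have "{p\<in>A\<times>B. (\<lambda>(a, b). (a + v - b) mod v) p = g} = (\<lambda>b. ((b + g) mod v, b)) ` {b\<in>B. (b + g) mod v \<in> A}"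
  proof (intro equalityI subsetI)
    fix p assume p: "p \<in> {p\<in>A\<times>B. (\<lambda>(a, b). (a + v - b) mod v) p = g}"
    obtain a b where ab: "p = (a, b)" "a \<in> A" "b \<in> B" "(a + v - b) mod v = g" using p by auto
    have "a = (b + g) mod v" using key2[of a v b g] ab assms by auto
    then show "p \<in> (\<lambda>b. ((b + g) mod v, b)) ` {b\<in>B. (b + g) mod v \<in> A}" using ab by auto
  next
    fix p assume "p \<in> (\<lambda>b. ((b + g) mod v, b)) ` {b\<in>B. (b + g) mod v \<in> A}"
    then obtain b where b: "p = ((b + g) mod v, b)" "b \<in> B" "(b + g) mod v \<in> A" by auto
    have "((b + g) mod v + v - b) mod v = g" using key2[of "(b + g) mod v" v b g] b assms by auto
    then show "p \<in> {p\<in>A\<times>B. (\<lambda>(a, b). (a + v - b) mod v) p = g}" using b by auto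
  qed
  also have "card \<dots> = card {b\<in>B. (b + g) mod v \<in> A}"
    by (rule card_image) (auto simp: inj_on_def)
  finally show ?thesis .
qed

lemma zdiff_count_big:
  assumes "A \<subseteq> {..<v}" "B \<subseteq> {..<v}" "v \<le> g" "0 < v"
  shows "count (zdiff v A B) g = 0"
proof -
  have fin: "finite (A \<times> B)" using assms by (meson finite_SigmaI finite_lessThan finite_subset)
  have "count (zdiff v A B) g = card {p\<in>A\<times>B. (\<lambda>(a, b). (a + v - b) mod v) p = g}"
    unfolding zdiff_def by (rule count_img_mset_set[OF fin])
  also have "{p\<in>A\<times>B. (\<lambda>(a, b). (a + v - b) mod v) p = g} = {}"
    using assms by (auto, metis leD mod_less_divisor)
  finally show ?thesis by simp
qed

lemma shift_card:
  assumes "0 < (n::nat)"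
  shows "card {u\<in>{..<n}. P ((u + d) mod n)} = card {w\<in>{..<n}. P w}"
proof (rule bij_betw_same_card[of "\<lambda>u. (u + d) mod n"])
  show "bij_betw (\<lambda>u. (u + d) mod n) {u\<in>{..<n}. P ((u + d) mod n)} {w\<in>{..<n}. P w}"
  proof (rule bij_betwI[where g="\<lambda>w. (w + (n - d mod n)) mod n"])
    show "(\<lambda>u. (u + d) mod n) \<in> {u \<in> {..<n}. P ((u + d) mod n)} \<rightarrow> {w \<in> {..<n}. P w}"
      using assms by auto
    have inv1: "((w + (n - d mod n)) mod n + d) mod n = w" if "w < n" for w
    proof -
      have "((w + (n - d mod n)) mod n + d) mod n = (w + (n - d mod n) + d) mod n"
        by (simp add: mod_add_left_eq)
      also have "\<dots> = (w + (n - d mod n) + d mod n) mod n"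
        by (metis mod_add_right_eq)
      also have "w + (n - d mod n) + d mod n = w + n"
        using mod_less_divisor[OF assms, of d] by linarith
      finally show ?thesis using that by simp
    qed
    have inv2: "((u + d) mod n + (n - d mod n)) mod n = u" if "u < n" for u
    proof -
      have "((u + d) mod n + (n - d mod n)) mod n = (u + d + (n - d mod n)) mod n"
        by (simp add: mod_add_left_eq)
      also have "\<dots> = (u + d mod n + (n - d mod n)) mod n"
        by (metis mod_add_left_eq mod_add_right_eq)
      also have "u + d mod n + (n - d mod n) = u + n"
        using mod_less_divisor[OF assms, of d] by linarith
      finally show ?thesis using that by simp
    qed
    show "(\<lambda>w. (w + (n - d mod n)) mod n) \<in> {w \<in> {..<n}. P w} \<rightarrow> {u \<in> {..<n}. P ((u + d) mod n)}"
      using assms inv1 by auto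
    show "\<And>x. x \<in> {u \<in> {..<n}. P ((u + d) mod n)} \<Longrightarrow> ((x + d) mod n + (n - d mod n)) mod n = x"
      using inv2 by auto
    show "\<And>y. y \<in> {w \<in> {..<n}. P w} \<Longrightarrow> ((y + (n - d mod n)) mod n + d) mod n = y"
      using inv1 by auto
  qed
qed


theorem theorem3p4:
  fixes v k lam :: nat and x y :: "nat \<Rightarrow> nat"
  assumes "0 < v" and "0 < k" and "k dvd v" and "v dvd k ^ 2"
    and "lam = k ^ 2 div v"
    and "\<forall>t<v. x t = (if t < k then 1 else 0)"
    and "\<forall>t<v. y t \<in> {0, 1}"
    and "\<forall>t<v. y ((t + k) mod v) = y t"
    and "card {t. t < k \<and> y t = 1} = lam"
  shows "is_PSEDF v 2 k lam (nth [{t. t < v \<and> x t = 1}, {t. t < v \<and> y t = 1}])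
       \<and> is_SEDF v 2 k lam (nth [{t. t < v \<and> x t = 1}, {t. t < v \<and> y t = 1}])"
proof -
  define A where "A = {t. t < v \<and> x t = 1}"
  define B where "B = {t. t < v \<and> y t = 1}"
  define Y where "Y t = y (t mod v)" for t
  have kv: "k \<le> v" using assms(1,3) by (simp add: dvd_imp_le)
  have A_eq: "A = {..<k}" using assms(6) kv unfolding A_def by (auto split: if_splits)
  have Asub: "A \<subseteq> {..<v}" and Bsub: "B \<subseteq> {..<v}" unfolding A_def B_def by auto
  have Yk: "Y (t + k) = Y t" for t
  proof -
    have "(t + k) mod v = (t mod v + k) mod v" by (simp add: mod_add_left_eq)
    then show ?thesis unfolding Y_def using assms(8) assms(1) by simp
  qed
  have Ym: "Y (s + k * n) = Y s" for s n
  proof (induction n)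
    case 0 then show ?case by simp
  next
    case (Suc n)
    have "Y (s + k * Suc n) = Y ((s + k * n) + k)" by (simp add: algebra_simps)
    also have "\<dots> = Y (s + k * n)" by (rule Yk)
    finally show ?case using Suc by simp
  qed
  have Ymod: "Y t = Y (t mod k)" for t
    using Ym[of "t mod k" "t div k"] by simp
  have window: "card {u\<in>{..<k}. Y (u + d) = 1} = lam" for d
  proof -
    have "card {u\<in>{..<k}. Y (u + d) = 1} = card {u\<in>{..<k}. (\<lambda>w. Y w = 1) ((u + d) mod k)}"
      by (metis Ymod)
    also have "\<dots> = card {w\<in>{..<k}. Y w = 1}"
      by (rule shift_card[OF assms(2)])
    also have "{w\<in>{..<k}. Y w = 1} = {t. t < k \<and> y t = 1}"
      unfolding Y_def using kv by auto
    finally show ?thesis using assms(9) by simp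
  qed
  have cAB: "count (zdiff v A B) g = count (lamG v lam) g" for g
  proof (cases "g < v")
    case True
    have "count (zdiff v A B) g = card {a\<in>A. (a + v - g) mod v \<in> B}"
      by (rule zdiff_count_fst[OF Asub Bsub True])
    also have "{a\<in>A. (a + v - g) mod v \<in> B} = {u\<in>{..<k}. Y (u + (v - g)) = 1}"
    proof -
      have "u + v - g = u + (v - g)" for u using True by simp
      then show ?thesis unfolding A_eq B_def Y_def using assms(1) by auto
    qed
    finally show ?thesis using window[of "v - g"] True unfolding lamG_def by simp
  next
    case False
    then show ?thesis using zdiff_count_big[OF Asub Bsub _ assms(1)] unfolding lamG_def by simp
  qed
  have cBA: "count (zdiff v B A) g = count (lamG v lam) g" for g
  proof (cases "g < v")
    case True
    have "count (zdiff v B A) g = card {a\<in>A. (a + g) mod v \<in> B}"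
      by (rule zdiff_count_snd[OF Bsub Asub True])
    also have "{a\<in>A. (a + g) mod v \<in> B} = {u\<in>{..<k}. Y (u + g) = 1}"
      unfolding A_eq B_def Y_def using True by auto
    finally show ?thesis using window True unfolding lamG_def by simp
  next
    case False
    then show ?thesis using zdiff_count_big[OF Bsub Asub _ assms(1)] unfolding lamG_def by simp
  qed
  have AB: "zdiff v A B = lamG v lam" by (rule multiset_eqI) (rule cAB)
  have BA: "zdiff v B A = lamG v lam" by (rule multiset_eqI) (rule cBA)
  have cardA: "card A = k" unfolding A_eq by simp
  have finB: "finite B" using Bsub finite_subset by blast
  have "size (zdiff v A B) = k * card B"
    unfolding zdiff_def using finB cardA by (simp add: card_cartesian_product)
  moreover have "size (lamG v lam) = k * k"
  proof -
    have "size (lamG v lam) = lam * v" unfolding lamG_def by simp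
    also have "\<dots> = k ^ 2" using assms(4,5) by simp
    finally show ?thesis by (simp add: power2_eq_square)
  qed
  ultimately have cardB: "card B = k" using AB assms(2) by simp
  have fam: "ksubset_family v 2 k (nth [A, B])"
    unfolding ksubset_family_def using Asub Bsub cardA cardB
    by (auto simp: less_Suc_eq numeral_2_eq_2)
  have P: "is_PSEDF v 2 k lam (nth [A, B])"
    unfolding is_PSEDF_def using fam AB BA
    by (auto simp: less_Suc_eq numeral_2_eq_2)
  have S: "is_SEDF v 2 k lam (nth [A, B])"
  proof -
    have "{..<2::nat} - {0} = {1}" "{..<2::nat} - {1} = {0}" by auto
    then show ?thesis unfolding is_SEDF_def using fam AB BA
      by (auto simp: less_Suc_eq numeral_2_eq_2)
  qed
  show ?thesis using P S unfolding A_def B_def by simp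
qed

end
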